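(* The cycle $C_5$ is $2$-adjustable, but $C_5$ admits no locally injective homomorphism to $\mathring{K}_3$.
   Context: $\mathring{K}_n$ denotes the complete graph on $n$ vertices with one loop added at a single vertex. A homomorphism $f:G\to H$ is a map $V(G)\to V(H)$ with $f(u)f(v)\in E(H)$ whenever $uv\in E(G)$; it is locally injective if for every vertex $v$, $f$ is injective on $N(v)$. An incidence of $G$ is a pair $(v,e)$ with $v\in e\in E(G)$; incidences $(v,e),(u,f)$ are adjacent if $v=u$, or $e=f$, or $vu\in\{e,f\}$; an incidence coloring gives adjacent incidences distinct colors. $S^0_c(v)=\{c(v,uv):uv\in E(G)\}$. An incidence coloring $c$ with palette $P$ is adjustable if there are two distinct colors $x,y\in P$ such that no vertex $v$ has $\{x,y\}\subseteq S^0_c(v)$. $G$ is $2$-adjustable if it admits an adjustable incidence coloring with palette of size $\Delta(G)+2$. *)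

theory Defs
  imports Main
begin

text \<open>Graphs are given by a vertex set V and an edge set E of vertex sets:
  an edge uv is the set {u,v}; a loop at v is the singleton {v}.\<close>

definition nbhd :: "'a set set \<Rightarrow> 'a \<Rightarrow> 'a set" where
  "nbhd E v = {u. {u, v} \<in> E}"

definition degree :: "'a set set \<Rightarrow> 'a \<Rightarrow> nat" where
  "degree E v = card {e \<in> E. v \<in> e}"

definition max_degree :: "'a set \<Rightarrow> 'a set set \<Rightarrow> nat" where
  "max_degree V E = Max (degree E ` V)"

definition graph_hom :: "'a set \<Rightarrow> 'a set set \<Rightarrow> 'b set \<Rightarrow> 'b set set \<Rightarrow> ('a \<Rightarrow> 'b) \<Rightarrow> bool" where
  "graph_hom VG EG VH EH f \<longleftrightarrow> f ` VG \<subseteq> VH \<and>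
     (\<forall>u\<in>VG. \<forall>v\<in>VG. {u, v} \<in> EG \<longrightarrow> {f u, f v} \<in> EH)"

definition locally_injective_hom ::
  "'a set \<Rightarrow> 'a set set \<Rightarrow> 'b set \<Rightarrow> 'b set set \<Rightarrow> ('a \<Rightarrow> 'b) \<Rightarrow> bool" where
  "locally_injective_hom VG EG VH EH f \<longleftrightarrow> graph_hom VG EG VH EH f \<and>
     (\<forall>v\<in>VG. inj_on f (nbhd EG v))"

definition looped_K_V :: "nat \<Rightarrow> nat set" where
  "looped_K_V n = {..<n}"

definition looped_K_E :: "nat \<Rightarrow> nat set set" where
  "looped_K_E n = {e. e \<subseteq> {..<n} \<and> card e = 2} \<union> {{0}}"

definition C5_V :: "nat set" where
  "C5_V = {..<5}"

definition C5_E :: "nat set set" where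
  "C5_E = {{i, (i + 1) mod 5} | i. i < 5}"

definition incidences :: "'a set set \<Rightarrow> ('a \<times> 'a set) set" where
  "incidences E = {(v, e). e \<in> E \<and> v \<in> e}"

definition inc_adjacent :: "'a \<times> 'a set \<Rightarrow> 'a \<times> 'a set \<Rightarrow> bool" where
  "inc_adjacent i j \<longleftrightarrow> (case i of (v, e) \<Rightarrow> case j of (u, f) \<Rightarrow>
      v = u \<or> e = f \<or> {v, u} = e \<or> {v, u} = f)"

definition incidence_coloring :: "'a set set \<Rightarrow> 'c set \<Rightarrow> ('a \<times> 'a set \<Rightarrow> 'c) \<Rightarrow> bool" where
  "incidence_coloring E P c \<longleftrightarrow>
     (\<forall>i\<in>incidences E. c i \<in> P) \<and>
     (\<forall>i\<in>incidences E. \<forall>j\<in>incidences E. i \<noteq> j \<and> inc_adjacent i j \<longrightarrow> c i \<noteq> c j)"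

definition S0 :: "'a set set \<Rightarrow> ('a \<times> 'a set \<Rightarrow> 'c) \<Rightarrow> 'a \<Rightarrow> 'c set" where
  "S0 E c v = {c (v, e) | e. e \<in> E \<and> v \<in> e}"

definition adjustable :: "'a set \<Rightarrow> 'a set set \<Rightarrow> 'c set \<Rightarrow> ('a \<times> 'a set \<Rightarrow> 'c) \<Rightarrow> bool" where
  "adjustable V E P c \<longleftrightarrow> incidence_coloring E P c \<and>
     (\<exists>x\<in>P. \<exists>y\<in>P. x \<noteq> y \<and> (\<forall>v\<in>V. \<not> {x, y} \<subseteq> S0 E c v))"

definition two_adjustable :: "'a set \<Rightarrow> 'a set set \<Rightarrow> bool" where
  "two_adjustable V E \<longleftrightarrow>
     (\<exists>(P :: nat set) c. finite P \<and> card P = max_degree V E + 2 \<and> adjustable V E P c)"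

end

theory Submission
  imports Defs
begin

lemma C5E: "C5_E = {{0,1},{1,2},{2,3},{3,4},{4,0::nat}}"
proof -
  have "{i::nat. i < 5} = {0,1,2,3,4}" by auto
  have "C5_E = (\<lambda>i. {i, (i+1) mod 5}) ` {..<5}" unfolding C5_E_def by auto
  also have "{..<5::nat} = {0,1,2,3,4}" by auto
  finally have "C5_E = (\<lambda>i. {i, (i+1) mod 5}) ` {0,1,2,3,4}" .
  then show ?thesis by (simp only: image_insert image_empty) (simp add: insert_commute numeral_2_eq_2)
qed

lemma C5V: "C5_V = {0,1,2,3,4}"
  unfolding C5_V_def by auto

lemma maxdeg: "max_degree C5_V C5_E = 2"
proof -
  have d0: "{e \<in> C5_E. (0::nat) \<in> e} = {{0,1},{0,4}}" unfolding C5E by auto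
  have c0: "degree C5_E 0 = 2" unfolding degree_def d0 by (simp add: doubleton_eq_iff)
  have d1: "{e \<in> C5_E. (1::nat) \<in> e} = {{1,0},{1,2}}" unfolding C5E by auto
  have c1: "degree C5_E 1 = 2" unfolding degree_def d1 by (simp add: doubleton_eq_iff)
  have d2: "{e \<in> C5_E. (2::nat) \<in> e} = {{2,1},{2,3}}" unfolding C5E by auto
  have c2: "degree C5_E 2 = 2" unfolding degree_def d2 by (simp add: doubleton_eq_iff)
  have d3: "{e \<in> C5_E. (3::nat) \<in> e} = {{3,2},{3,4}}" unfolding C5E by auto
  have c3: "degree C5_E 3 = 2" unfolding degree_def d3 by (simp add: doubleton_eq_iff)
  have d4: "{e \<in> C5_E. (4::nat) \<in> e} = {{4,3},{4,0}}" unfolding C5E by auto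
  have c4: "degree C5_E 4 = 2" unfolding degree_def d4 by (simp add: doubleton_eq_iff)
  show ?thesis unfolding max_degree_def C5V using c0 c1 c2 c3 c4 by simp
qed

definition colN :: "nat \<Rightarrow> nat \<Rightarrow> nat" where
 "colN v w = (if v=0 \<and> w=1 then 0 else if v=1 \<and> w=0 then 1 else if v=1 \<and> w=2 then 2
   else if v=2 \<and> w=1 then 0 else if v=2 \<and> w=3 then 1 else if v=3 \<and> w=2 then 2
   else if v=3 \<and> w=4 then 0 else if v=4 \<and> w=3 then 1 else if v=4 \<and> w=0 then 3 else 2)"

definition arcs :: "(nat \<times> nat) list" where
 "arcs = [(0,1),(1,0),(1,2),(2,1),(2,3),(3,2),(3,4),(4,3),(4,0),(0,4)]"

lemma arcs_check: "\<forall>(v,w)\<in>set arcs. \<forall>(u,x)\<in>set arcs. (v,w) \<noteq> (u,x) \<and> (v = u \<or> u = w \<or> v = x) \<longrightarrow> colN v w \<noteq> colN u x"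
  unfolding arcs_def colN_def by simp

lemma adj_arc: "v \<noteq> w \<Longrightarrow> u \<noteq> x \<Longrightarrow> inc_adjacent (v,{v,w}) (u,{u,x}) \<Longrightarrow> v = u \<or> u = w \<or> v = x"
  unfolding inc_adjacent_def by (auto simp: doubleton_eq_iff)

definition col :: "nat \<times> nat set \<Rightarrow> nat" where
  "col p = (case p of (v,e) \<Rightarrow> colN v (Max (e - {v})))"

lemma col_arc: "v \<noteq> w \<Longrightarrow> col (v,{v,w}) = colN v w"
  unfolding col_def by (simp add: insert_Diff_if)

lemma swaps: "{1,0} = {0,1::nat}" "{2,1} = {1,2::nat}" "{3,2} = {2,3::nat}" "{4,3} = {3,4::nat}" "{0,4} = {4,0::nat}"
  by auto

lemma inc: "incidences C5_E = (\<lambda>(v,w). (v,{v,w})) ` set arcs"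
proof -
  have g: "\<And>a A. {(v,e). e \<in> insert a A \<and> v \<in> e} = (\<lambda>v. (v,a)) ` a \<union> {(v,e). e \<in> A \<and> v \<in> e}"
    by auto
  have z: "{(v,e). e \<in> {} \<and> v \<in> e} = {}" by simp
  show ?thesis
  unfolding incidences_def C5E arcs_def g z
  by (simp only: list.set image_insert image_empty prod.case swaps Un_insert_left Un_empty_left)
qed

lemma arcs_ne: "(v,w) \<in> set arcs \<Longrightarrow> v \<noteq> w"
  unfolding arcs_def by auto

lemma colN_range: "colN v w \<in> {0,1,2,3}"
  unfolding colN_def by simp

lemma colring: "incidence_coloring C5_E {0,1,2,3} col"
  unfolding incidence_coloring_def
proof (intro conjI ballI impI)
  fix i assume "i \<in> incidences C5_E"
  then obtain v w where "i = (v,{v,w})" "(v,w) \<in> set arcs" unfolding inc by auto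
  then show "col i \<in> {0,1,2,3}" using col_arc arcs_ne colN_range by simp
next
  fix i j assume i: "i \<in> incidences C5_E" and j: "j \<in> incidences C5_E"
    and ij: "i \<noteq> j \<and> inc_adjacent i j"
  from i obtain v w where iv: "i = (v,{v,w})" "(v,w) \<in> set arcs" unfolding inc by auto
  from j obtain u x where ju: "j = (u,{u,x})" "(u,x) \<in> set arcs" unfolding inc by auto
  have vw: "v \<noteq> w" "u \<noteq> x" using iv ju arcs_ne by auto
  have ne: "(v,w) \<noteq> (u,x)" using ij iv ju by auto
  have ad: "v = u \<or> u = w \<or> v = x" using adj_arc[OF vw] ij iv ju by simp
  have "colN v w \<noteq> colN u x" using arcs_check iv(2) ju(2) ne ad by fast
  then show "col i \<noteq> col j" using iv ju vw by (simp add: col_arc)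
qed

lemma S0img: "S0 C5_E col v = (\<lambda>e. col (v,e)) ` {e \<in> C5_E. v \<in> e}"
  unfolding S0_def by auto

lemma dsets: "{e \<in> C5_E. (0::nat) \<in> e} = {{0,1},{0,4}}"
  "{e \<in> C5_E. (1::nat) \<in> e} = {{1,0},{1,2}}"
  "{e \<in> C5_E. (2::nat) \<in> e} = {{2,1},{2,3}}"
  "{e \<in> C5_E. (3::nat) \<in> e} = {{3,2},{3,4}}"
  "{e \<in> C5_E. (4::nat) \<in> e} = {{4,3},{4,0}}"
  unfolding C5E by (auto simp: insert_commute)

lemma part1: "two_adjustable C5_V C5_E"
  unfolding two_adjustable_def
proof (intro exI conjI)
  show "finite {0,1,2,3::nat}" by simp
  show "card {0,1,2,3::nat} = max_degree C5_V C5_E + 2" by (simp add: maxdeg)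
  have "\<forall>v\<in>C5_V. \<not> {0,3} \<subseteq> S0 C5_E col v"
    unfolding C5V by (simp only: ball_simps S0img dsets image_insert image_empty) (simp add: col_arc colN_def)
  then show "adjustable C5_V C5_E {0,1,2,3} col"
    unfolding adjustable_def using colring by auto
qed

lemma KE: "{a,b} \<in> looped_K_E 3 \<longleftrightarrow> a < 3 \<and> b < 3 \<and> (a \<noteq> b \<or> (a = 0 \<and> b = 0))"
  unfolding looped_K_E_def by (auto simp: card_insert_if doubleton_eq_iff)

lemma nb: "nbhd C5_E 0 = {1,4}" "nbhd C5_E 1 = {0,2}" "nbhd C5_E 2 = {1,3}"
  "nbhd C5_E 3 = {2,4}" "nbhd C5_E 4 = {3,0}"
  unfolding nbhd_def C5E by (auto simp: doubleton_eq_iff)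

lemma arith5: "\<lbrakk>(a::nat) < 3; b < 3; c < 3; d < 3; e < 3;
  a \<noteq> b \<or> a = 0 \<and> b = 0; b \<noteq> c \<or> b = 0 \<and> c = 0; c \<noteq> d \<or> c = 0 \<and> d = 0;
  d \<noteq> e \<or> d = 0 \<and> e = 0; e \<noteq> a \<or> e = 0 \<and> a = 0;
  b \<noteq> e; a \<noteq> c; b \<noteq> d; c \<noteq> e; d \<noteq> a\<rbrakk> \<Longrightarrow> False"
proof -
  assume "(a::nat) < 3" "b < 3" "c < 3" "d < 3" "e < 3"
  then have "a \<in> {0,1,2}" "b \<in> {0,1,2}" "c \<in> {0,1,2}" "d \<in> {0,1,2}" "e \<in> {0,1,2}" by auto
  moreover assume "a \<noteq> b \<or> a = 0 \<and> b = 0" "b \<noteq> c \<or> b = 0 \<and> c = 0" "c \<noteq> d \<or> c = 0 \<and> d = 0"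
  "d \<noteq> e \<or> d = 0 \<and> e = 0" "e \<noteq> a \<or> e = 0 \<and> a = 0"
  "b \<noteq> e" "a \<noteq> c" "b \<noteq> d" "c \<noteq> e" "d \<noteq> a"
  ultimately show False by auto
qed

lemma part2: "\<not> (\<exists>f. locally_injective_hom C5_V C5_E (looped_K_V 3) (looped_K_E 3) f)"
proof
  assume "\<exists>f. locally_injective_hom C5_V C5_E (looped_K_V 3) (looped_K_E 3) f"
  then obtain f where h: "graph_hom C5_V C5_E (looped_K_V 3) (looped_K_E 3) f"
    and li: "\<forall>v\<in>C5_V. inj_on f (nbhd C5_E v)"
    unfolding locally_injective_hom_def by blast
  have E: "\<forall>u\<in>C5_V. \<forall>v\<in>C5_V. {u, v} \<in> C5_E \<longrightarrow> {f u, f v} \<in> looped_K_E 3"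
    using h unfolding graph_hom_def by blast
  have e01: "{f 0, f 1} \<in> looped_K_E 3" using E unfolding C5V C5E by simp
  have e12: "{f 1, f 2} \<in> looped_K_E 3" using E unfolding C5V C5E by simp
  have e23: "{f 2, f 3} \<in> looped_K_E 3" using E unfolding C5V C5E by simp
  have e34: "{f 3, f 4} \<in> looped_K_E 3" using E unfolding C5V C5E by simp
  have e40: "{f 4, f 0} \<in> looped_K_E 3" using E unfolding C5V C5E by simp
  have l0: "inj_on f (nbhd C5_E 0)" "inj_on f (nbhd C5_E 1)" "inj_on f (nbhd C5_E 2)"
     "inj_on f (nbhd C5_E 3)" "inj_on f (nbhd C5_E 4)" using li unfolding C5V by blast+
  have i: "f 1 \<noteq> f 4" "f 0 \<noteq> f 2" "f 1 \<noteq> f 3" "f 2 \<noteq> f 4" "f 3 \<noteq> f 0"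
    using l0 unfolding nb by auto
  show False
    using e01 e12 e23 e34 e40 i unfolding KE
    by (rule_tac arith5[of "f 0" "f 1" "f 2" "f 3" "f 4"]) auto
qed

theorem mainTheorem11:
  shows "two_adjustable C5_V C5_E \<and>
    \<not> (\<exists>f. locally_injective_hom C5_V C5_E (looped_K_V 3) (looped_K_E 3) f)"
  using part1 part2 by blast

end
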